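(* Let $N$ and $M$ be large positive parameters, let $\mathcal{X}$ be any subset of $\{1,2,\ldots,10^M\}$, and let $\Delta=\Delta(N)$ be any function with $\Delta\to\infty$. If $M|\mathcal{X}|\Delta^2\le \pi(N)\log M$, then for $\pi(N)\bigl(1+O(1/\Delta)\bigr)$ primes $p\le N$ we have $$\#\{x \bmod p \;:\; x\in\mathcal{X}\}=|\mathcal{X}|\bigl(1+O(\Delta^{-1})\bigr).$$
   Context: $\pi(N)$ denotes the number of primes $p\le N$. $\#\{x \bmod p : x\in\mathcal{X}\}$ is the number of distinct residues modulo $p$ of elements of $\mathcal{X}$. *)

theory Defs
  imports Complex_Main "HOL-Computational_Algebra.Primes"
begin

definition prime_pi :: "nat \<Rightarrow> nat" where
  "prime_pi N = card {p. prime p \<and> p \<le> N}"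

definition num_residues :: "nat set \<Rightarrow> nat \<Rightarrow> nat" where
  "num_residues X p = card ((\<lambda>x. x mod p) ` X)"

end

theory Submission imports Defs "HOL-Real_Asymp.Real_Asymp" begin

lemma prod_pf_le: "(n::nat) > 0 \<Longrightarrow> \<Prod>(prime_factors n) \<le> n"
proof -
  assume n: "n > 0"
  have "\<Prod>(prime_factors n) \<le> (\<Prod>p \<in> prime_factors n. p ^ multiplicity p n)"
  proof (rule prod_mono)
    fix p assume p: "p \<in> prime_factors n"
    have "multiplicity p n > 0" using p n by (simp add: prime_factors_multiplicity)
    moreover have "p > 0" using p prime_gt_0_nat by (auto dest: in_prime_factors_imp_prime)
    ultimately show "0 \<le> p \<and> p \<le> p ^ multiplicity p n"
      by (simp add: self_le_power)
  qed
  also have "\<dots> = n" using prime_factorization_nat[OF n] by simp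
  finally show ?thesis .
qed

definition dif :: "nat \<Rightarrow> nat \<Rightarrow> nat" where "dif x y = max x y - min x y"

lemma card_S_bound:
  fixes X :: "nat set" and x T M :: nat
  assumes XS: "X \<subseteq> {1..10^M}" and T: "T \<ge> 2" and x: "x \<in> X"
  shows "real (card {p. prime p \<and> (\<exists>y\<in>X. y\<noteq>x \<and> p dvd dif x y)})
          \<le> real T + real M * real (card X) * ln 10 / ln T"
proof -
  define S where "S = {p. prime p \<and> (\<exists>y\<in>X. y\<noteq>x \<and> p dvd dif x y)}"
  have fX: "finite X" using XS finite_subset by blast
  define P where "P = (\<Prod>y\<in>X-{x}. dif x y)"
  have dpos: "y \<in> X - {x} \<Longrightarrow> dif x y > 0" for y by (auto simp: dif_def)
  have dle: "y \<in> X - {x} \<Longrightarrow> dif x y \<le> 10^M" for y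
  proof -
    assume "y \<in> X - {x}"
    hence "x \<le> 10^M" "y \<le> 10^M" using XS x by auto
    thus ?thesis by (simp add: dif_def)
  qed
  have Ppos: "P > 0" unfolding P_def using dpos fX by (auto intro: prod_pos)
  have SP: "S \<subseteq> prime_factors P"
  proof
    fix p assume "p \<in> S"
    then obtain y where y: "prime p" "y \<in> X - {x}" "p dvd dif x y" unfolding S_def by auto
    have "dif x y dvd P" unfolding P_def using fX y(2) by (intro dvd_prodI) auto
    with y show "p \<in> prime_factors P" using Ppos by (auto simp: in_prime_factors_iff intro: dvd_trans)
  qed
  have fS: "finite S" using SP finite_subset by blast
  have "P \<le> (\<Prod>y\<in>X-{x}. 10^M)" unfolding P_def using dle by (intro prod_mono) auto
  also have "\<dots> = (10^M)^(card (X - {x}))" by simp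
  also have "\<dots> \<le> (10^M)^(card X)" by (intro power_increasing) (auto simp: fX card_Diff1_le)
  finally have Ple: "P \<le> 10^(M * card X)" by (simp add: power_mult)
  define S1 where "S1 = {p\<in>S. p < T}"
  define S2 where "S2 = {p\<in>S. \<not> p < T}"
  have cS: "card S = card S1 + card S2" unfolding S1_def S2_def
    using fS by (subst card_Un_disjoint[symmetric]) (auto intro: arg_cong[where f=card])
  have c1: "card S1 \<le> T" using card_mono[of "{..<T}" S1] unfolding S1_def by auto
  have "T ^ card S2 = (\<Prod>p\<in>S2. T)" by simp
  also have "\<dots> \<le> \<Prod>S2" by (intro prod_mono) (auto simp: S2_def)
  also have "\<dots> \<le> \<Prod>S"
  proof -
    have "\<Prod>S2 dvd \<Prod>S" using fS by (intro prod_dvd_prod_subset) (auto simp: S2_def)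
    moreover have "\<Prod>S > 0" using SP fS by (intro prod_pos) (auto dest: in_prime_factors_imp_prime prime_gt_0_nat)
    ultimately show ?thesis by (simp add: dvd_imp_le)
  qed
  also have "\<dots> \<le> \<Prod>(prime_factors P)"
    using SP by (intro dvd_imp_le prod_dvd_prod_subset) (auto intro: prod_pos dest: in_prime_factors_imp_prime prime_gt_0_nat)
  also have "\<dots> \<le> P" using prod_pf_le Ppos by blast
  finally have "T ^ card S2 \<le> 10 ^ (M * card X)" using Ple by linarith
  hence "real T ^ card S2 \<le> 10 ^ (M * card X)" by (metis of_nat_le_iff of_nat_numeral of_nat_power)
  hence "ln (real T ^ card S2) \<le> ln (10 ^ (M * card X))" using T by (subst ln_le_cancel_iff) auto
  hence "real (card S2) * ln T \<le> real M * real (card X) * ln 10" using T by (simp add: ln_realpow)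
  moreover have "ln T > 0" using T by simp
  ultimately have "real (card S2) \<le> real M * real (card X) * ln 10 / ln T" by (simp add: field_simps)
  thus ?thesis using cS c1 unfolding S_def[symmetric] by simp
qed

lemma res_lb:
  fixes X :: "nat set" and p :: nat
  assumes fX: "finite X"
  shows "card X \<le> num_residues X p + card {x\<in>X. \<exists>y\<in>X. y\<noteq>x \<and> p dvd dif x y}"
proof -
  define C where "C = {x\<in>X. \<exists>y\<in>X. y\<noteq>x \<and> p dvd dif x y}"
  have cX: "card X = card (X - C) + card C"
  proof -
    have "C \<subseteq> X" unfolding C_def by auto
    moreover hence "finite C" using fX finite_subset by blast
    ultimately show ?thesis using card_Diff_subset[of C X] card_mono[OF fX, of C] by simp
  qed
  have inj: "inj_on (\<lambda>x. x mod p) (X - C)"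
  proof (rule inj_onI, rule ccontr)
    fix a b assume a: "a \<in> X - C" and b: "b \<in> X - C" and e: "a mod p = b mod p" and ne: "a \<noteq> b"
    have "p dvd dif a b"
    proof (cases "a \<le> b")
      case True thus ?thesis using e mod_eq_dvd_iff_nat[of a b p] by (simp add: dif_def max_def min_def)
    next
      case False thus ?thesis using e mod_eq_dvd_iff_nat[of b a p] by (simp add: dif_def max_def min_def)
    qed
    thus False using a b ne unfolding C_def by auto
  qed
  have "card (X - C) = card ((\<lambda>x. x mod p) ` (X - C))" using card_image[OF inj] by simp
  also have "\<dots> \<le> num_residues X p" unfolding num_residues_def using fX by (intro card_mono) auto
  finally show ?thesis using cX C_def by simp
qed

theorem corollary1:
  fixes \<Delta> :: "nat \<Rightarrow> real"
  assumes "filterlim \<Delta> at_top at_top"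
  shows "\<exists>C>0. \<exists>N0 M0. \<forall>N\<ge>N0. \<forall>M\<ge>M0. \<forall>X::nat set.
           X \<subseteq> {1..10^M} \<longrightarrow>
           real M * real (card X) * (\<Delta> N)^2 \<le> real (prime_pi N) * ln (real M) \<longrightarrow>
           real (card {p. prime p \<and> p \<le> N \<and>
                   \<bar>real (num_residues X p) - real (card X)\<bar> \<le> C * real (card X) / \<Delta> N})
             \<ge> real (prime_pi N) * (1 - C / \<Delta> N)"
proof -
  have "eventually (\<lambda>N. 1 \<le> \<Delta> N) at_top" using assms filterlim_at_top by blast
  then obtain N0 where N0: "\<And>N. N \<ge> N0 \<Longrightarrow> 1 \<le> \<Delta> N" by (auto simp: eventually_at_top_linorder)
  have "eventually (\<lambda>M::nat. sqrt(real M) + 1 \<le> real M / ln (real M)) at_top" by real_asymp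
  then obtain M1 where M1: "\<And>M. M \<ge> M1 \<Longrightarrow> sqrt(real M) + 1 \<le> real M / ln (real M)"
    by (auto simp: eventually_at_top_linorder)
  define M0 where "M0 = max M1 3"
  have "\<forall>N\<ge>N0. \<forall>M\<ge>M0. \<forall>X::nat set.
           X \<subseteq> {1..10^M} \<longrightarrow>
           real M * real (card X) * (\<Delta> N)^2 \<le> real (prime_pi N) * ln (real M) \<longrightarrow>
           real (card {p. prime p \<and> p \<le> N \<and>
                   \<bar>real (num_residues X p) - real (card X)\<bar> \<le> 19 * real (card X) / \<Delta> N})
             \<ge> real (prime_pi N) * (1 - 19 / \<Delta> N)"
  proof (intro allI impI)
    fix N M :: nat and X :: "nat set"
    assume N: "N \<ge> N0" and M: "M \<ge> M0" and XS: "X \<subseteq> {1..10^M}"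
      and hyp: "real M * real (card X) * (\<Delta> N)^2 \<le> real (prime_pi N) * ln (real M)"
    define D where "D = \<Delta> N"
    have D1: "D \<ge> 1" using N0 N D_def by simp
    have M3: "M \<ge> 3" and MM1: "M \<ge> M1" using M M0_def by auto
    have lnM: "ln (real M) > 0" using M3 by simp
    define PN where "PN = {p. prime p \<and> p \<le> N}"
    have fPN: "finite PN" unfolding PN_def by auto
    have piN: "prime_pi N = card PN" unfolding prime_pi_def PN_def ..
    have fX: "finite X" using XS finite_subset by blast
    define n where "n = card X"
    define G where "G = {p. prime p \<and> p \<le> N \<and>
                   \<bar>real (num_residues X p) - real (card X)\<bar> \<le> 19 * real (card X) / \<Delta> N}"
    define B where "B = PN - G"
    have GP: "G \<subseteq> PN" unfolding G_def PN_def by auto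
    have cPN: "card PN = card G + card B" unfolding B_def
      using GP fPN by (metis card_Diff_subset card_mono finite_subset le_add_diff_inverse)
    show "real (card G) \<ge> real (prime_pi N) * (1 - 19 / \<Delta> N)"
      unfolding G_def[symmetric]
    proof (cases "n = 0")
      case True
      hence "X = {}" using fX n_def by simp
      hence "G = PN" unfolding G_def PN_def by (simp add: num_residues_def)
      moreover have "real (prime_pi N) * (1 - 19 / \<Delta> N) \<le> real (prime_pi N)"
        using D1 D_def by (simp add: mult_left_le)
      ultimately show ?thesis using piN by simp
    next
      case False
      hence n1: "real n \<ge> 1" by simp
      define col where "col p x \<longleftrightarrow> (\<exists>y\<in>X. y\<noteq>x \<and> p dvd dif x y)" for p x
      define K where "K = 19 * real M * real n / ln (real M)"
      define T where "T = nat \<lceil>sqrt (real M)\<rceil>"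
      have sq1: "sqrt (real M) > 1" using M3 by simp
      have Teq: "real T = real_of_int \<lceil>sqrt (real M)\<rceil>" unfolding T_def by simp
      have T1: "real T \<ge> sqrt (real M)" using Teq by linarith
      have T2: "real T \<le> sqrt (real M) + 1" using Teq by linarith
      have T3: "T \<ge> 2" using Teq sq1 by linarith
      have lnT: "ln (real T) \<ge> ln (real M) / 2"
      proof -
        have "ln (sqrt (real M)) \<le> ln (real T)" using T1 sq1 T3 by (subst ln_le_cancel_iff) auto
        moreover have "ln (sqrt (real M)) = ln (real M) / 2" using M3 by (simp add: ln_sqrt)
        ultimately show ?thesis by simp
      qed
      have ln10: "ln (10::real) \<le> 9" using ln_le_minus_one[of 10] by simp
      have Sx: "real (card {p. prime p \<and> col p x}) \<le> K" if x: "x \<in> X" for x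
      proof -
        have "real (card {p. prime p \<and> col p x}) \<le> real T + real M * real n * ln 10 / ln T"
          using card_S_bound[OF XS T3 x] unfolding col_def n_def .
        also have "real M * real n * ln 10 / ln T \<le> real M * real n * 9 / (ln (real M) / 2)"
          using lnM lnT ln10 by (intro frac_le mult_left_mono) auto
        also have "\<dots> = 18 * real M * real n / ln (real M)" by simp
        also have "real T \<le> real M * real n / ln (real M)"
        proof -
          have "real T \<le> real M / ln (real M)" using T2 M1[OF MM1] by linarith
          also have "\<dots> \<le> real M * real n / ln (real M)"
            using n1 lnM by (intro divide_right_mono) (auto simp: mult_le_cancel_left1)
          finally show ?thesis .
        qed
        finally show ?thesis unfolding K_def by (simp add: add_divide_distrib[symmetric])
      qed
      define cnt where "cnt p = card {x\<in>X. col p x}" for p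
      have swap: "(\<Sum>p\<in>PN. cnt p) = (\<Sum>x\<in>X. card {p\<in>PN. col p x})"
      proof -
        have "(\<Sum>p\<in>PN. cnt p) = (\<Sum>p\<in>PN. \<Sum>x\<in>X. if col p x then 1 else 0)"
          unfolding cnt_def using fX by (simp add: sum.If_cases Int_def conj_commute)
        also have "\<dots> = (\<Sum>x\<in>X. \<Sum>p\<in>PN. if col p x then 1 else 0)" by (rule sum.swap)
        also have "\<dots> = (\<Sum>x\<in>X. card {p\<in>PN. col p x})"
          using fPN by (simp add: sum.If_cases Int_def conj_commute)
        finally show ?thesis .
      qed
      have "real (\<Sum>p\<in>PN. cnt p) \<le> (\<Sum>x\<in>X. K)"
        unfolding swap of_nat_sum
      proof (rule sum_mono)
        fix x assume x: "x \<in> X"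
        have "card {p\<in>PN. col p x} \<le> card {p. prime p \<and> col p x}"
        proof (rule card_mono)
          have "{p. prime p \<and> col p x} \<subseteq> {..10^M}"
          proof
            fix p assume "p \<in> {p. prime p \<and> col p x}"
            then obtain y where y: "y \<in> X" "y \<noteq> x" "p dvd dif x y" unfolding col_def by auto
            have "x \<le> 10^M" "y \<le> 10^M" using XS x y by auto
            moreover have "dif x y > 0" using y by (auto simp: dif_def)
            ultimately have "dif x y \<le> 10^M" by (simp add: dif_def)
            moreover have "p \<le> dif x y" using y(3) \<open>dif x y > 0\<close> by (rule dvd_imp_le)
            ultimately show "p \<in> {..10^M}" by simp
          qed
          thus "finite {p. prime p \<and> col p x}" using finite_subset by blast
        qed (auto simp: PN_def)
        thus "real (card {p\<in>PN. col p x}) \<le> K" using Sx[OF x] by linarith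
      qed
      hence sumK: "real (\<Sum>p\<in>PN. cnt p) \<le> real n * K" using n_def by simp
      have Bcnt: "19 * real n / D < real (cnt p)" if p: "p \<in> B" for p
      proof -
        have "p > 0" using p unfolding B_def PN_def by (auto dest: prime_gt_0_nat)
        have lb: "card X \<le> num_residues X p + cnt p" using res_lb[OF fX] unfolding cnt_def col_def .
        have ub: "num_residues X p \<le> card X" unfolding num_residues_def by (rule card_image_le[OF fX])
        have "\<not> \<bar>real (num_residues X p) - real (card X)\<bar> \<le> 19 * real (card X) / D"
          using p unfolding B_def G_def PN_def D_def by auto
        moreover have "real (card X) \<le> real (num_residues X p) + real (cnt p)"
          using lb by (metis of_nat_add of_nat_le_iff)
        moreover have "real (num_residues X p) \<le> real (card X)" using ub by simp
        ultimately show ?thesis using n_def by (auto simp: abs_if split: if_splits)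
      qed
      have "real (card B) * (19 * real n / D) \<le> (\<Sum>p\<in>B. real (cnt p))"
        using Bcnt sum_mono[of B "\<lambda>_. 19 * real n / D" "\<lambda>p. real (cnt p)"] by (simp add: less_imp_le)
      also have "\<dots> \<le> (\<Sum>p\<in>PN. real (cnt p))"
        using fPN by (intro sum_mono2) (auto simp: B_def)
      also have "\<dots> \<le> real n * K" using sumK by simp
      finally have "real (card B) * (19 * real n / D) \<le> real n * K" .
      hence cB: "real (card B) \<le> real M * real n * D / ln (real M)"
        using n1 D1 lnM unfolding K_def by (simp add: field_simps)
      have "real M * real n * D / ln (real M) \<le> real (prime_pi N) / D"
        using hyp D1 lnM unfolding n_def[symmetric] D_def[symmetric]
        by (simp add: field_simps power2_eq_square)
      hence "real (card B) \<le> real (prime_pi N) / D" using cB by linarith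
      moreover have "real (prime_pi N) / D \<le> 19 * real (prime_pi N) / D"
        using D1 by (simp add: divide_right_mono)
      moreover have "real (prime_pi N) = real (card G) + real (card B)" using cPN piN by simp
      moreover have "real (prime_pi N) * (1 - 19 / \<Delta> N) = real (prime_pi N) - 19 * real (prime_pi N) / D"
        unfolding D_def by (simp add: right_diff_distrib)
      ultimately show ?thesis by linarith
    qed
  qed
  thus ?thesis by (intro exI[of _ 19]) auto
qed

end
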